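(* Let $\varepsilon>0$ and let $(u_n)_{n=1}^\infty$ be a real sequence. Then $(u_n)_{n=1}^\infty$ is $\varepsilon$-approximately subadditive if and only if there exist real sequences $(v_n)_{n=1}^\infty$ and $(w_n)_{n=1}^\infty$ such that $(v_n)$ is subadditive, $0\le w_n\le\varepsilon$ for all $n\in\mathbb{N}$, and $u_n=v_n+w_n$ for all $n\in\mathbb{N}$ (in particular $v_n\le u_n$ for all $n$, i.e. $(v_n)$ is a subadditive minorant of $(u_n)$).
   Context: $\mathbb{N}=\{1,2,3,\dots\}$. For $n\in\mathbb{N}$, a partition of $n$ is a finite list $n_1,\dots,n_k\in\mathbb{N}$ ($k\ge1$) with $n_1+\cdots+n_k=n$. A sequence $(u_n)_{n=1}^\infty$ is called $\varepsilon$-approximately subadditive (for a fixed $\varepsilon>0$) if for every $n\in\mathbb{N}$ and every partition $n_1,\dots,n_k$ of $n$ one has $u_n\le u_{n_1}+\cdots+u_{n_k}+\varepsilon$. It is called subadditive if for every $n\in\mathbb{N}$ and every partition $n_1,\dots,n_k$ of $n$ one has $u_n\le u_{n_1}+\cdots+u_{n_k}$. *)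

theory Defs
  imports Main "HOL.Real"
begin

(* Sequences (u_n)_{n>=1} are modelled as functions nat => real; the value at 0 is ignored.
   A partition of n is a nonempty list of positive naturals summing to n. *)
definition is_partition :: "nat \<Rightarrow> nat list \<Rightarrow> bool" where
  "is_partition n ns \<longleftrightarrow> ns \<noteq> [] \<and> (\<forall>k\<in>set ns. k \<ge> 1) \<and> sum_list ns = n"

definition approx_subadditive :: "real \<Rightarrow> (nat \<Rightarrow> real) \<Rightarrow> bool" where
  "approx_subadditive \<epsilon> u \<longleftrightarrow>
     (\<forall>n\<ge>1. \<forall>ns. is_partition n ns \<longrightarrow> u n \<le> sum_list (map u ns) + \<epsilon>)"

definition subadditive_seq :: "(nat \<Rightarrow> real) \<Rightarrow> bool" where
  "subadditive_seq u \<longleftrightarrow>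
     (\<forall>n\<ge>1. \<forall>ns. is_partition n ns \<longrightarrow> u n \<le> sum_list (map u ns))"

end

theory Submission
  imports Defs
begin

lemma part_finite: "finite {ns. is_partition n ns}"
proof -
  have "{ns. is_partition n ns} \<subseteq> {xs. set xs \<subseteq> {1..n} \<and> length xs \<le> n}"
  proof safe
    fix ns x assume p: "is_partition n ns"
    then have ge: "\<forall>k\<in>set ns. k \<ge> 1" and s: "sum_list ns = n" by (auto simp: is_partition_def)
    { assume "x \<in> set ns" then show "x \<in> {1..n}" using ge s member_le_sum_list[of x ns] by auto }
    have "sum_list (map (\<lambda>_. 1::nat) ns) \<le> sum_list (map (\<lambda>x. x) ns)"
      by (rule sum_list_mono) (use ge in auto)
    then show "length ns \<le> n" using s by (simp add: sum_list_triv)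
  qed
  then show ?thesis by (rule finite_subset) (rule finite_lists_length_le, simp)
qed

definition vv :: "(nat \<Rightarrow> real) \<Rightarrow> nat \<Rightarrow> real" where
  "vv u n = Min ((\<lambda>ns. sum_list (map u ns)) ` {ns. is_partition n ns})"

lemma vv_le: "is_partition n ns \<Longrightarrow> vv u n \<le> sum_list (map u ns)"
  unfolding vv_def by (rule Min_le) (use part_finite in auto)

lemma vv_ex: assumes "n \<ge> 1" shows "\<exists>p. is_partition n p \<and> vv u n = sum_list (map u p)"
proof -
  have "is_partition n [n]" using assms by (simp add: is_partition_def)
  then have "vv u n \<in> (\<lambda>ns. sum_list (map u ns)) ` {ns. is_partition n ns}"
    unfolding vv_def by (intro Min_in) (use part_finite in auto)
  then show ?thesis by auto
qed

lemma vv_sub: "subadditive_seq (vv u)"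
  unfolding subadditive_seq_def
proof (intro allI impI)
  fix n ns assume n: "n \<ge> 1" and p: "is_partition n ns"
  define pp where "pp = (\<lambda>k. SOME q. is_partition k q \<and> vv u k = sum_list (map u q))"
  have ppk: "is_partition k (pp k) \<and> vv u k = sum_list (map u (pp k))" if "k \<ge> 1" for k
    unfolding pp_def by (rule someI_ex) (rule vv_ex[OF that])
  have ge: "\<forall>k\<in>set ns. k \<ge> 1" and s: "sum_list ns = n" and ne: "ns \<noteq> []"
    using p by (auto simp: is_partition_def)
  define q where "q = concat (map pp ns)"
  have "is_partition n q"
  proof -
    obtain a r where ar: "ns = a # r" using ne by (cases ns) auto
    have "pp a \<noteq> []" using ppk[of a] ge ar by (auto simp: is_partition_def)
    then have "q \<noteq> []" using ar by (simp add: q_def)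
    moreover have "\<forall>k\<in>set q. k \<ge> 1" using ppk ge by (fastforce simp: q_def is_partition_def)
    moreover have "sum_list q = sum_list ns" unfolding q_def using ge
    proof (induction ns)
      case (Cons a r) then show ?case using ppk[of a] by (simp add: is_partition_def)
    qed simp
    ultimately show ?thesis using s by (simp add: is_partition_def)
  qed
  then have "vv u n \<le> sum_list (map u q)" by (rule vv_le)
  also have "sum_list (map u q) = sum_list (map (vv u) ns)" unfolding q_def using ge
    by (induction ns) (auto simp: ppk)
  finally show "vv u n \<le> sum_list (map (vv u) ns)" .
qed

theorem proposition2:
  fixes \<epsilon> :: real and u :: "nat \<Rightarrow> real"
  assumes "\<epsilon> > 0"
  shows "approx_subadditive \<epsilon> u \<longleftrightarrow>
    (\<exists>v w :: nat \<Rightarrow> real. subadditive_seq v \<and>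
       (\<forall>n\<ge>1. 0 \<le> w n \<and> w n \<le> \<epsilon>) \<and>
       (\<forall>n\<ge>1. u n = v n + w n))"
proof
  assume a: "approx_subadditive \<epsilon> u"
  show "\<exists>v w :: nat \<Rightarrow> real. subadditive_seq v \<and>
       (\<forall>n\<ge>1. 0 \<le> w n \<and> w n \<le> \<epsilon>) \<and>
       (\<forall>n\<ge>1. u n = v n + w n)"
  proof (intro exI conjI)
    show "subadditive_seq (vv u)" by (rule vv_sub)
    show "\<forall>n\<ge>1. 0 \<le> u n - vv u n \<and> u n - vv u n \<le> \<epsilon>"
    proof (intro allI impI conjI)
      fix n :: nat assume n: "n \<ge> 1"
      have "is_partition n [n]" using n by (simp add: is_partition_def)
      from vv_le[OF this, of u] show "0 \<le> u n - vv u n" by simp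
      obtain p where "is_partition n p" "vv u n = sum_list (map u p)" using vv_ex[OF n] by blast
      then show "u n - vv u n \<le> \<epsilon>" using a n unfolding approx_subadditive_def by fastforce
    qed
    show "\<forall>n\<ge>1. u n = vv u n + (u n - vv u n)" by simp
  qed
next
  assume "\<exists>v w :: nat \<Rightarrow> real. subadditive_seq v \<and>
       (\<forall>n\<ge>1. 0 \<le> w n \<and> w n \<le> \<epsilon>) \<and>
       (\<forall>n\<ge>1. u n = v n + w n)"
  then obtain v w where sv: "subadditive_seq v" and w: "\<forall>n\<ge>1. 0 \<le> w n \<and> w n \<le> \<epsilon>"
    and uv: "\<forall>n\<ge>1. u n = v n + w n" by blast
  show "approx_subadditive \<epsilon> u"
    unfolding approx_subadditive_def
  proof (intro allI impI)
    fix n ns assume n: "n \<ge> 1" and p: "is_partition n ns"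
    have "sum_list (map v ns) \<le> sum_list (map u ns)"
      by (rule sum_list_mono) (use p w uv in \<open>auto simp: is_partition_def\<close>)
    moreover have "v n \<le> sum_list (map v ns)" using sv n p by (auto simp: subadditive_seq_def)
    ultimately show "u n \<le> sum_list (map u ns) + \<epsilon>" using uv w n by force
  qed
qed

end
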